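(* Let $G$ be a graph with $N\ge 1$ vertices and let $d,n,r$ be positive integers with $d\le n$. Call a sequence $S$ of $k$ vertices of $G$ rare if $|N(S)| \leq (2n)^{-2n}\,t_{K_{r,d}}(G)^{\frac{k}{rd}}N$. Call a sequence $T=(v_1,\ldots,v_r)$ of $r$ vertices of $G$ bad with respect to $k$ if the number of rare sequences of $k$ vertices all of whose entries lie in $N(T)$ is at least $\frac{1}{2n}|N(T)|^k$, and call $T$ good if for every $k$ with $d\le k\le n$ it is not bad with respect to $k$. Then $$\sum_{T \text{ good}} |N(T)|^d \geq \tfrac12 h_{K_{r,d}}(G),$$ where the sum is over all good sequences $T$ of $r$ vertices.
   Context: All graphs are finite and simple. Sequences of vertices may contain repeated vertices. For a sequence $S$ of vertices, the common neighborhood $N(S)$ is the set of vertices adjacent to every vertex of $S$. $h_F(G)$ is the number of homomorphisms from $F$ to $G$ (maps $V(F)\to V(G)$ sending edges to edges), and $t_F(G)=h_F(G)/|V(G)|^{|V(F)|}$. $K_{r,d}$ is the complete bipartite graph with parts of sizes $r$ and $d$. *)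

theory Defs
  imports "HOL-Library.FuncSet" Complex_Main
begin

definition simple_graph :: "'a set \<Rightarrow> ('a \<Rightarrow> 'a \<Rightarrow> bool) \<Rightarrow> bool" where
  "simple_graph V E \<longleftrightarrow> finite V \<and> (\<forall>u v. E u v \<longrightarrow> u \<in> V \<and> v \<in> V)
     \<and> (\<forall>u v. E u v \<longrightarrow> E v u) \<and> (\<forall>u. \<not> E u u)"

definition seqs :: "'a set \<Rightarrow> nat \<Rightarrow> 'a list set" where
  "seqs V k = {xs. length xs = k \<and> set xs \<subseteq> V}"

definition common_nbhd :: "'a set \<Rightarrow> ('a \<Rightarrow> 'a \<Rightarrow> bool) \<Rightarrow> 'a list \<Rightarrow> 'a set" where
  "common_nbhd V E S = {v \<in> V. \<forall>u \<in> set S. E u v}"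

definition hom_count :: "'b set \<Rightarrow> ('b \<Rightarrow> 'b \<Rightarrow> bool) \<Rightarrow> 'a set \<Rightarrow> ('a \<Rightarrow> 'a \<Rightarrow> bool) \<Rightarrow> nat" where
  "hom_count VF EF V E = card {f \<in> VF \<rightarrow>\<^sub>E V. \<forall>x y. EF x y \<longrightarrow> E (f x) (f y)}"

definition hom_density :: "'b set \<Rightarrow> ('b \<Rightarrow> 'b \<Rightarrow> bool) \<Rightarrow> 'a set \<Rightarrow> ('a \<Rightarrow> 'a \<Rightarrow> bool) \<Rightarrow> real" where
  "hom_density VF EF V E = real (hom_count VF EF V E) / real (card V) ^ card VF"

definition Krd_V :: "nat \<Rightarrow> nat \<Rightarrow> (nat + nat) set" where
  "Krd_V r d = Inl ` {0..<r} \<union> Inr ` {0..<d}"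

definition Krd_E :: "nat \<Rightarrow> nat \<Rightarrow> (nat + nat) \<Rightarrow> (nat + nat) \<Rightarrow> bool" where
  "Krd_E r d x y \<longleftrightarrow> (\<exists>i j. i < r \<and> j < d \<and>
      ((x = Inl i \<and> y = Inr j) \<or> (x = Inr j \<and> y = Inl i)))"

definition rare :: "'a set \<Rightarrow> ('a \<Rightarrow> 'a \<Rightarrow> bool) \<Rightarrow> nat \<Rightarrow> nat \<Rightarrow> nat \<Rightarrow> 'a list \<Rightarrow> bool" where
  "rare V E n r d S \<longleftrightarrow>
     real (card (common_nbhd V E S)) \<le>
       (2 * real n) powr (- 2 * real n)
       * hom_density (Krd_V r d) (Krd_E r d) V E powr (real (length S) / real (r * d))
       * real (card V)"

definition bad :: "'a set \<Rightarrow> ('a \<Rightarrow> 'a \<Rightarrow> bool) \<Rightarrow> nat \<Rightarrow> nat \<Rightarrow> nat \<Rightarrow> nat \<Rightarrow> 'a list \<Rightarrow> bool" where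
  "bad V E n r d k T \<longleftrightarrow>
     real (card {S \<in> seqs V k. set S \<subseteq> common_nbhd V E T \<and> rare V E n r d S})
       \<ge> 1 / (2 * real n) * real (card (common_nbhd V E T)) ^ k"

definition good :: "'a set \<Rightarrow> ('a \<Rightarrow> 'a \<Rightarrow> bool) \<Rightarrow> nat \<Rightarrow> nat \<Rightarrow> nat \<Rightarrow> 'a list \<Rightarrow> bool" where
  "good V E n r d T \<longleftrightarrow> (\<forall>k. d \<le> k \<and> k \<le> n \<longrightarrow> \<not> bad V E n r d k T)"

end

theory Submission
  imports Defs
begin

lemma seqs_card: "finite A \<Longrightarrow> card (seqs A k) = card A ^ k"
  and seqs_finite: "finite A \<Longrightarrow> finite (seqs A k)"
  unfolding seqs_def using card_lists_length_eq finite_lists_length_eq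
  by (metis (no_types, lifting) Collect_cong)+

lemma nbhd_sub: "common_nbhd V E T \<subseteq> V"
  by (auto simp: common_nbhd_def)

lemma nbhd_seqs:
  assumes "finite V"
  shows "card {S \<in> seqs V k. set S \<subseteq> common_nbhd V E T} = card (common_nbhd V E T) ^ k"
proof -
  have "{S \<in> seqs V k. set S \<subseteq> common_nbhd V E T} = seqs (common_nbhd V E T) k"
    using nbhd_sub[of V E T] by (auto simp: seqs_def)
  then show ?thesis using seqs_card[of "common_nbhd V E T" k] assms
    by (metis finite_subset nbhd_sub)
qed

lemma swap_nbhd:
  assumes "simple_graph V E" "T \<in> seqs V r" "S \<in> seqs V k"
  shows "set S \<subseteq> common_nbhd V E T \<longleftrightarrow> set T \<subseteq> common_nbhd V E S"
  using assms unfolding simple_graph_def seqs_def common_nbhd_def by blast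

lemma card_filter_sum: "finite A \<Longrightarrow> real (card {x\<in>A. P x}) = (\<Sum>x\<in>A. if P x then 1 else 0)"
  by (simp add: sum.If_cases Int_def)

lemma double_count:
  assumes G: "simple_graph V E"
  shows "(\<Sum>T\<in>seqs V r. real (card {S \<in> seqs V k. set S \<subseteq> common_nbhd V E T \<and> P S}))
     = (\<Sum>S\<in>{S\<in>seqs V k. P S}. real (card (common_nbhd V E S)) ^ r)"
proof -
  have fV: "finite V" using G by (simp add: simple_graph_def)
  have "(\<Sum>T\<in>seqs V r. real (card {S \<in> seqs V k. set S \<subseteq> common_nbhd V E T \<and> P S}))
     = (\<Sum>T\<in>seqs V r. \<Sum>S\<in>seqs V k. if set S \<subseteq> common_nbhd V E T \<and> P S then 1 else 0)"
    by (intro sum.cong refl card_filter_sum seqs_finite fV)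
  also have "\<dots> = (\<Sum>S\<in>seqs V k. \<Sum>T\<in>seqs V r. if set S \<subseteq> common_nbhd V E T \<and> P S then 1 else 0)"
    by (rule sum.swap)
  also have "\<dots> = (\<Sum>S\<in>seqs V k. if P S then real (card {T \<in> seqs V r. set T \<subseteq> common_nbhd V E S}) else 0)"
  proof (intro sum.cong refl)
    fix S assume S: "S \<in> seqs V k"
    have "(\<Sum>T\<in>seqs V r. if set S \<subseteq> common_nbhd V E T \<and> P S then 1 else 0)
       = (\<Sum>T\<in>seqs V r. if P S then (if set T \<subseteq> common_nbhd V E S then 1 else 0) else (0::real))"
      by (intro sum.cong refl) (use swap_nbhd[OF G _ S] in auto)
    also have "\<dots> = (if P S then real (card {T \<in> seqs V r. set T \<subseteq> common_nbhd V E S}) else 0)"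
      by (simp add: card_filter_sum seqs_finite fV)
    finally show "(\<Sum>T\<in>seqs V r. if set S \<subseteq> common_nbhd V E T \<and> P S then 1 else 0) = \<dots>" .
  qed
  also have "\<dots> = (\<Sum>S\<in>{S\<in>seqs V k. P S}. real (card (common_nbhd V E S)) ^ r)"
    by (simp add: sum.inter_filter seqs_finite fV, intro sum.cong refl, simp add: nbhd_seqs[OF fV])
  finally show ?thesis .
qed

lemma card_Krd: "card (Krd_V r d) = r + d"
  unfolding Krd_V_def
  by (subst card_Un_disjoint) (auto simp: card_image)

lemma hom_le:
  assumes G: "simple_graph V E"
  shows "real (hom_count (Krd_V r d) (Krd_E r d) V E)
     \<le> (\<Sum>T\<in>seqs V r. real (card (common_nbhd V E T)) ^ d)"
proof -
  have fV: "finite V" using G by (simp add: simple_graph_def)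
  define H where "H = {f \<in> Krd_V r d \<rightarrow>\<^sub>E V. \<forall>x y. Krd_E r d x y \<longrightarrow> E (f x) (f y)}"
  define Q where "Q = (SIGMA T:seqs V r. {S \<in> seqs V d. set S \<subseteq> common_nbhd V E T})"
  define \<phi> where "\<phi> = (\<lambda>f::nat+nat\<Rightarrow>'a. (map (f \<circ> Inl) [0..<r], map (f \<circ> Inr) [0..<d]))"
  have fQ: "finite Q" unfolding Q_def using seqs_finite[OF fV] by auto
  have cQ: "card Q = (\<Sum>T\<in>seqs V r. card (common_nbhd V E T) ^ d)"
    unfolding Q_def using seqs_finite[OF fV]
    by (simp add: nbhd_seqs[OF fV])
  have inj: "inj_on \<phi> H"
  proof
    fix f g assume f: "f \<in> H" and g: "g \<in> H" and eq: "\<phi> f = \<phi> g"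
    show "f = g"
    proof (rule PiE_ext)
      show "f \<in> Krd_V r d \<rightarrow>\<^sub>E V" "g \<in> Krd_V r d \<rightarrow>\<^sub>E V" using f g by (auto simp: H_def)
      fix x assume "x \<in> Krd_V r d"
      then show "f x = g x"
      proof (auto simp: Krd_V_def)
        fix i assume "i < r"
        then show "f (Inl i) = g (Inl i)" using eq unfolding \<phi>_def
          by (metis (no_types, lifting) comp_apply diff_zero length_map length_upt nth_map nth_upt
              plus_nat.add_0 prod.inject)
      next
        fix i assume "i < d"
        then show "f (Inr i) = g (Inr i)" using eq unfolding \<phi>_def
          by (metis (no_types, lifting) comp_apply diff_zero length_map length_upt nth_map nth_upt
              plus_nat.add_0 prod.inject)
      qed
    qed
  qed
  have img: "\<phi> ` H \<subseteq> Q"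
  proof
    fix p assume "p \<in> \<phi> ` H"
    then obtain f where f: "f \<in> H" and p: "p = \<phi> f" by auto
    have fV': "\<And>x. x \<in> Krd_V r d \<Longrightarrow> f x \<in> V" using f by (auto simp: H_def)
    have fE: "\<And>i j. i < r \<Longrightarrow> j < d \<Longrightarrow> E (f (Inl i)) (f (Inr j))"
      using f by (auto simp: H_def Krd_E_def)
    have T: "map (f \<circ> Inl) [0..<r] \<in> seqs V r"
      unfolding seqs_def using fV' by (auto simp: Krd_V_def)
    have S: "map (f \<circ> Inr) [0..<d] \<in> seqs V d"
      unfolding seqs_def using fV' by (auto simp: Krd_V_def)
    have N: "set (map (f \<circ> Inr) [0..<d]) \<subseteq> common_nbhd V E (map (f \<circ> Inl) [0..<r])"
    proof
      fix v assume "v \<in> set (map (f \<circ> Inr) [0..<d])"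
      then obtain j where j: "j < d" "v = f (Inr j)" by auto
      have "v \<in> V" using j fV' by (auto simp: Krd_V_def)
      moreover have "\<forall>u\<in>set (map (f \<circ> Inl) [0..<r]). E u v" using j fE by auto
      ultimately show "v \<in> common_nbhd V E (map (f \<circ> Inl) [0..<r])" by (simp add: common_nbhd_def)
    qed
    show "p \<in> Q" unfolding p \<phi>_def Q_def using T S N by blast
  qed
  have "hom_count (Krd_V r d) (Krd_E r d) V E = card H" by (simp add: hom_count_def H_def)
  also have "\<dots> = card (\<phi> ` H)" using inj by (simp add: card_image)
  also have "\<dots> \<le> card Q" using img fQ by (rule card_mono[rotated])
  finally have le: "hom_count (Krd_V r d) (Krd_E r d) V E \<le> card Q" .
  have "real (card Q) = (\<Sum>T\<in>seqs V r. real (card (common_nbhd V E T)) ^ d)"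
    unfolding cQ by simp
  then show ?thesis using le by (metis of_nat_le_iff)
qed


lemma thresh:
  fixes a M :: real and d k :: nat
  assumes "a \<ge> 0" "M > 0" "d \<le> k"
  shows "a ^ d \<le> M ^ d + a ^ k / M ^ (k - d)"
proof (cases "a \<le> M")
  case True
  then have "a ^ d \<le> M ^ d" using assms by (simp add: power_mono)
  moreover have "a ^ k / M ^ (k - d) \<ge> 0" using assms by simp
  ultimately show ?thesis by linarith
next
  case False
  then have "M ^ (k - d) \<le> a ^ (k - d)" using assms by (simp add: power_mono)
  then have "a ^ d * M ^ (k - d) \<le> a ^ d * a ^ (k - d)" using assms by (simp add: mult_left_mono)
  also have "\<dots> = a ^ k" using assms by (simp add: power_add[symmetric])
  finally have "a ^ d \<le> a ^ k / M ^ (k - d)" using assms by (simp add: pos_le_divide_eq)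
  moreover have "M ^ d \<ge> 0" using assms by simp
  ultimately show ?thesis by linarith
qed

lemma nat_ineq:
  fixes n :: nat assumes "n \<ge> 2"
  shows "8 * real n ^ 2 * (4 * real n) ^ (n - 1) \<le> (2 * real n) ^ (2 * n)"
proof -
  have e1: "8 * real n ^ 2 * (4 * real n) ^ (n - 1) = 2 * real n * (4 * real n) ^ n"
    using assms by (cases n) (auto simp: power2_eq_square algebra_simps)
  have e2: "(2 * real n) ^ (2 * n) = (4 * real n) ^ n * real n ^ n"
    by (simp add: power_mult power_mult_distrib power2_eq_square)
  have "real n ^ (n - 1) \<ge> real n ^ 1"
    using assms by (intro power_increasing) auto
  then have "real n ^ n \<ge> real n * real n"
    using assms by (cases n) auto
  moreover have "2 * real n \<le> real n * real n" using assms by (intro mult_right_mono) auto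
  ultimately have "real n ^ n \<ge> 2 * real n" by linarith
  then have "2 * real n * (4 * real n) ^ n \<le> real n ^ n * (4 * real n) ^ n"
    by (rule mult_right_mono) simp
  then have "2 * real n * (4 * real n) ^ n \<le> (4 * real n) ^ n * real n ^ n"
    by (simp only: mult.commute)
  then show ?thesis unfolding e1 e2 .
qed


lemma alg:
  fixes A B C x y t Z :: real
  assumes "A > 0" "B > 0" "C > 0"
  shows "x * (y * (t * A) * (B * Z)) / (B * (A / C)) = x * y * C * (t * Z)"
  using assms by (simp add: field_simps)

lemma frac_aux:
  fixes x y D :: real
  assumes "x * y \<le> D" "D > 0" "y > 0"
  shows "x / D \<le> 1 / y"
  using assms by (simp add: field_simps)

theorem lemma2p1:
  fixes V :: "'a set" and E :: "'a \<Rightarrow> 'a \<Rightarrow> bool" and d n r :: nat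
  assumes "simple_graph V E" and "card V \<ge> 1"
    and "d \<ge> 1" and "n \<ge> 1" and "r \<ge> 1" and "d \<le> n"
  shows "(\<Sum>T \<in> {T \<in> seqs V r. good V E n r d T}. real (card (common_nbhd V E T)) ^ d)
           \<ge> 1/2 * real (hom_count (Krd_V r d) (Krd_E r d) V E)"
proof -
  note G = assms(1)
  have d1: "d \<ge> 1" and n1: "n \<ge> 1" and r1: "r \<ge> 1" and dn: "d \<le> n" using assms by auto
  note nums = d1 n1 r1 dn
  have fV: "finite V" using G by (simp add: simple_graph_def)
  define N where "N = real (card V)"
  define t where "t = hom_density (Krd_V r d) (Krd_E r d) V E"
  define h where "h = real (hom_count (Krd_V r d) (Krd_E r d) V E)"
  define c where "c = (2 * real n) powr (- 2 * real n)"
  define a where "a = (\<lambda>T. real (card (common_nbhd V E T)))"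
  define R where "R = (\<lambda>k T. real (card {S \<in> seqs V k. set S \<subseteq> common_nbhd V E T \<and> rare V E n r d S}))"
  have N1: "N \<ge> 1" using assms(2) by (simp add: N_def)
  have ht: "h = t * N ^ (r + d)"
    using N1 by (simp add: h_def t_def N_def hom_density_def card_Krd)
  have h0: "h \<ge> 0" by (simp add: h_def)
  have t0: "t \<ge> 0" by (simp add: t_def hom_density_def)
  have a0: "\<And>T. a T \<ge> 0" by (simp add: a_def)
  have cpos: "c > 0" using assms by (simp add: c_def)
  have ceq: "c = 1 / (2 * real n) ^ (2 * n)"
  proof -
    have pw: "(2 * real n) powr (2 * real n) = (2 * real n) ^ (2 * n)"
      using assms powr_realpow[of "2 * real n" "2*n"] by simp
    have "c = (2 * real n) powr (- (2 * real n))" by (simp add: c_def)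
    also have "\<dots> = 1 / (2 * real n) ^ (2 * n)" by (simp add: powr_minus pw divide_inverse)
    finally show ?thesis .
  qed
  have cle: "c \<le> 1"
  proof -
    have "(1::real) \<le> (2 * real n) ^ (2 * n)" using assms by (intro one_le_power) auto
    then show ?thesis by (simp add: ceq)
  qed
  have crc: "c ^ r \<le> c" using cpos cle assms by (simp add: power_le_one_iff power_decreasing[of 1 r c, simplified])
  have hsum: "h \<le> (\<Sum>T\<in>seqs V r. a T ^ d)"
    unfolding h_def a_def by (rule hom_le[OF G])
  show ?thesis
  proof (cases "h = 0")
    case True
    then show ?thesis by (simp add: h_def sum_nonneg)
  next
    case False
    then have tpos: "t > 0" using ht t0 N1
      by (metis mult_eq_0_iff order_le_less)
    have Rsum: "(\<Sum>T\<in>seqs V r. R k T) \<le> c ^ r * t powr (real k / real d) * N ^ (k + r)" for k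
    proof -
      have "(\<Sum>T\<in>seqs V r. R k T) = (\<Sum>S\<in>{S\<in>seqs V k. rare V E n r d S}. a S ^ r)"
        unfolding R_def a_def by (rule double_count[OF G])
      also have "\<dots> \<le> (\<Sum>S\<in>{S\<in>seqs V k. rare V E n r d S}. c ^ r * t powr (real k / real d) * N ^ r)"
      proof (rule sum_mono)
        fix S assume S: "S \<in> {S\<in>seqs V k. rare V E n r d S}"
        then have len: "length S = k" by (simp add: seqs_def)
        have "a S \<le> c * t powr (real k / real (r * d)) * N"
          using S len by (simp add: rare_def a_def c_def t_def N_def)
        then have "a S ^ r \<le> (c * t powr (real k / real (r * d)) * N) ^ r"
          by (rule power_mono) (simp add: a0)
        also have "\<dots> = c ^ r * (t powr (real k / real (r * d))) ^ r * N ^ r"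
          by (simp add: power_mult_distrib)
        also have "(t powr (real k / real (r * d))) ^ r = t powr (real k / real d)"
          using tpos assms by (simp add: powr_power)
        finally show "a S ^ r \<le> c ^ r * t powr (real k / real d) * N ^ r" .
      qed
      also have "\<dots> = real (card {S\<in>seqs V k. rare V E n r d S}) * (c ^ r * t powr (real k / real d) * N ^ r)"
        by simp
      also have "\<dots> \<le> N ^ k * (c ^ r * t powr (real k / real d) * N ^ r)"
      proof (rule mult_right_mono)
        have "card {S\<in>seqs V k. rare V E n r d S} \<le> card (seqs V k)"
          by (rule card_mono) (auto simp: seqs_finite fV)
        then show "real (card {S\<in>seqs V k. rare V E n r d S}) \<le> N ^ k"
          by (simp add: seqs_card fV N_def flip: of_nat_power)
      qed (use cpos N1 in simp)
      finally show ?thesis by (simp add: power_add algebra_simps)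
    qed
    define B where "B = (\<lambda>k. {T \<in> seqs V r. bad V E n r d k T})"
    have Bk: "(\<Sum>T\<in>B k. a T ^ k) \<le> 2 * real n * (c ^ r * t powr (real k / real d) * N ^ (k + r))" for k
    proof -
      have "(\<Sum>T\<in>B k. a T ^ k) \<le> (\<Sum>T\<in>B k. 2 * real n * R k T)"
      proof (rule sum_mono)
        fix T assume "T \<in> B k"
        then have "R k T \<ge> 1 / (2 * real n) * a T ^ k" by (simp add: B_def bad_def R_def a_def)
        then show "a T ^ k \<le> 2 * real n * R k T" using assms
          by (simp add: field_simps)
      qed
      also have "\<dots> = 2 * real n * (\<Sum>T\<in>B k. R k T)" by (simp add: sum_distrib_left)
      also have "(\<Sum>T\<in>B k. R k T) \<le> (\<Sum>T\<in>seqs V r. R k T)"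
        by (rule sum_mono2) (auto simp: B_def R_def seqs_finite fV)
      finally show ?thesis using Rsum[of k] assms
        by (smt (verit, best) mult_left_mono of_nat_0_le_iff)
    qed
    have perk: "(\<Sum>T\<in>B k. a T ^ d) \<le> h / (2 * real n)" if k: "d \<le> k" "k \<le> n" for k
    proof (cases "k = d")
      case True
      have "(\<Sum>T\<in>B k. a T ^ d) \<le> 2 * real n * (c ^ r * t * N ^ (d + r))"
      proof -
        have dpos: "real d \<noteq> 0" using d1 by simp
        have "t powr (real k / real d) = t" using True dpos tpos by simp
        then show ?thesis using Bk[of k] True by simp
      qed
      also have "\<dots> = (2 * real n * c ^ r) * h" by (simp add: ht algebra_simps)
      also have "\<dots> \<le> (1 / (2 * real n)) * h"
      proof (rule mult_right_mono[OF _ h0])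
        have "2 * real n * c ^ r \<le> 2 * real n * c" using crc nums by simp
        also have "\<dots> = (2 * real n) / (2 * real n) ^ (2 * n)" by (simp add: ceq)
        also have "\<dots> \<le> 1 / (2 * real n)"
        proof -
          have "(2 * real n) ^ 2 \<le> (2 * real n) ^ (2 * n)"
            using nums by (intro power_increasing) auto
          then show ?thesis using nums
            by (simp add: field_simps power2_eq_square)
        qed
        finally show "2 * real n * c ^ r \<le> 1 / (2 * real n)" .
      qed
      finally show ?thesis by simp
    next
      case False
      then have kd: "d < k" using k by simp
      then have n2: "n \<ge> 2" using k nums by simp
      define q where "q = t / (4 * real n)"
      have qpos: "q > 0" using tpos nums by (simp add: q_def)
      define p where "p = q powr (1 / real d)"
      have ppos: "p > 0" using qpos by (simp add: p_def)
      define M where "M = N * p"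
      have Mpos: "M > 0" using N1 ppos by (simp add: M_def)
      define e where "e = real (k - d) / real d"
      have pd: "p ^ d = q" using qpos nums by (simp add: p_def powr_power)
      have pkd: "p ^ (k - d) = q powr e" using qpos nums by (simp add: p_def powr_power e_def)
      have cardB: "real (card (B k)) \<le> N ^ r"
      proof -
        have "card (B k) \<le> card (seqs V r)" by (rule card_mono) (auto simp: B_def seqs_finite fV)
        then show ?thesis by (simp add: seqs_card fV N_def flip: of_nat_power)
      qed
      have "(\<Sum>T\<in>B k. a T ^ d) \<le> (\<Sum>T\<in>B k. M ^ d + a T ^ k / M ^ (k - d))"
        by (rule sum_mono, rule thresh[OF a0 Mpos less_imp_le[OF kd]])
      also have "\<dots> = real (card (B k)) * M ^ d + (\<Sum>T\<in>B k. a T ^ k) / M ^ (k - d)"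
        by (simp add: sum.distrib sum_divide_distrib)
      also have "\<dots> \<le> N ^ r * M ^ d + (2 * real n * (c ^ r * t powr (real k / real d) * N ^ (k + r))) / M ^ (k - d)"
      proof (rule add_mono)
        show "real (card (B k)) * M ^ d \<le> N ^ r * M ^ d"
          by (rule mult_right_mono[OF cardB]) (use Mpos in simp)
        show "(\<Sum>T\<in>B k. a T ^ k) / M ^ (k - d) \<le> (2 * real n * (c ^ r * t powr (real k / real d) * N ^ (k + r))) / M ^ (k - d)"
          by (rule divide_right_mono[OF Bk[of k]]) (use Mpos in simp)
      qed
      also have "N ^ r * M ^ d = h / (4 * real n)"
        by (simp add: M_def power_mult_distrib pd q_def ht power_add)
      also have "(2 * real n * (c ^ r * t powr (real k / real d) * N ^ (k + r))) / M ^ (k - d)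
          = (2 * real n * c ^ r * (4 * real n) powr e) * h"
      proof -
        have tk: "t powr (real k / real d) = t * t powr e"
        proof -
          have "real k / real d = 1 + e" using kd nums by (simp add: e_def field_simps of_nat_diff)
          then show ?thesis using tpos by (simp add: powr_add)
        qed
        have Nk: "N ^ (k + r) = N ^ (k - d) * N ^ (r + d)"
          using kd by (simp add: power_add[symmetric])
        have qe: "q powr e = t powr e / (4 * real n) powr e" by (simp add: q_def powr_divide)
        have Mk: "M ^ (k - d) = N ^ (k - d) * (t powr e / (4 * real n) powr e)"
          by (simp add: M_def power_mult_distrib pkd qe)
        have p1: "t powr e > 0" "N ^ (k - d) > 0" "(4 * real n) powr e > 0"
          using tpos N1 nums by auto
        show ?thesis unfolding Mk tk Nk ht by (rule alg[OF p1(1) p1(2) p1(3)])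
      qed
      also have "h / (4 * real n) + (2 * real n * c ^ r * (4 * real n) powr e) * h
          \<le> h / (4 * real n) + (1 / (4 * real n)) * h"
      proof (intro add_left_mono mult_right_mono[OF _ h0])
        have "e \<le> real (n - 1)"
        proof -
          have "real (k - d) * 1 \<le> real (k - d) * real d" using nums by (intro mult_left_mono) auto
          then have "e \<le> real (k - d)" using nums by (simp add: e_def divide_le_eq)
          then show ?thesis using k nums by linarith
        qed
        then have "(4 * real n) powr e \<le> (4 * real n) powr real (n - 1)"
          using nums by (intro powr_mono) auto
        also have "\<dots> = (4 * real n) ^ (n - 1)" by (rule powr_realpow) (use nums in simp)
        finally have pe: "(4 * real n) powr e \<le> (4 * real n) ^ (n - 1)" .
        have "2 * real n * c ^ r * (4 * real n) powr e \<le> 2 * real n * c * (4 * real n) ^ (n - 1)"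
          using crc pe cpos nums by (intro mult_mono) auto
        also have "\<dots> = 2 * real n * (4 * real n) ^ (n - 1) / (2 * real n) ^ (2 * n)"
          by (simp add: ceq)
        also have "\<dots> \<le> 1 / (4 * real n)"
        proof (rule frac_aux)
          have "2 * real n * (4 * real n) ^ (n - 1) * (4 * real n) = 8 * real n ^ 2 * (4 * real n) ^ (n - 1)"
            by (simp add: power2_eq_square algebra_simps)
          then show "2 * real n * (4 * real n) ^ (n - 1) * (4 * real n) \<le> (2 * real n) ^ (2 * n)"
            using nat_ineq[OF n2] by linarith
        qed (use nums in auto)
        finally show "2 * real n * c ^ r * (4 * real n) powr e \<le> 1 / (4 * real n)" .
      qed
      also have "\<dots> = h / (2 * real n)" by (simp add: field_simps)
      finally show ?thesis .
    qed
    have split: "(\<Sum>T\<in>seqs V r. a T ^ d) = (\<Sum>T\<in>{T \<in> seqs V r. good V E n r d T}. a T ^ d)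
        + (\<Sum>T\<in>{T \<in> seqs V r. \<not> good V E n r d T}. a T ^ d)"
      by (simp add: sum.inter_filter seqs_finite fV flip: sum.distrib) (intro sum.cong; simp)
    have "(\<Sum>T\<in>{T \<in> seqs V r. \<not> good V E n r d T}. a T ^ d)
        \<le> (\<Sum>T\<in>seqs V r. \<Sum>k\<in>{d..n}. if bad V E n r d k T then a T ^ d else 0)"
    proof -
      have "(\<Sum>T\<in>{T \<in> seqs V r. \<not> good V E n r d T}. a T ^ d)
          \<le> (\<Sum>T\<in>{T \<in> seqs V r. \<not> good V E n r d T}. \<Sum>k\<in>{d..n}. if bad V E n r d k T then a T ^ d else 0)"
      proof (rule sum_mono)
        fix T assume "T \<in> {T \<in> seqs V r. \<not> good V E n r d T}"
        then obtain k0 where k0: "k0 \<in> {d..n}" "bad V E n r d k0 T" by (auto simp: good_def)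
        have "a T ^ d = (if bad V E n r d k0 T then a T ^ d else 0)" using k0 by simp
        also have "\<dots> \<le> (\<Sum>k\<in>{d..n}. if bad V E n r d k T then a T ^ d else 0)"
          by (rule member_le_sum[OF k0(1)]) (auto simp: a0)
        finally show "a T ^ d \<le> \<dots>" .
      qed
      also have "\<dots> \<le> (\<Sum>T\<in>seqs V r. \<Sum>k\<in>{d..n}. if bad V E n r d k T then a T ^ d else 0)"
        by (rule sum_mono2) (auto simp: seqs_finite fV a0 intro: sum_nonneg)
      finally show ?thesis .
    qed
    also have "\<dots> = (\<Sum>k\<in>{d..n}. \<Sum>T\<in>B k. a T ^ d)"
      by (subst sum.swap) (simp add: B_def sum.inter_filter seqs_finite fV)
    also have "\<dots> \<le> (\<Sum>k\<in>{d..n}. h / (2 * real n))"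
      by (rule sum_mono) (use perk in auto)
    also have "\<dots> = real (n + 1 - d) * h / (2 * real n)" by simp
    also have "\<dots> \<le> real n * h / (2 * real n)"
      using assms h0 by (intro divide_right_mono mult_right_mono) auto
    also have "\<dots> = h / 2" using assms by simp
    finally have "(\<Sum>T\<in>{T \<in> seqs V r. \<not> good V E n r d T}. a T ^ d) \<le> h / 2" .
    then show ?thesis using split hsum unfolding a_def h_def by linarith
  qed
qed

end
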